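(* Let $q$ be a prime and $1\le K<N$ with $q^K>2$. Let $G$ ($K\times N$) and $\mathbf{v}\in\mathbb{F}_q^N$ have independent uniformly distributed entries in $\mathbb{F}_q$, and for each message index $m$ let $\mathbf{x}_m=\mathbf{u}_mG+\mathbf{v}$, where $\mathbf{u}_m\in\mathbb{F}_q^K$ is the $q$-ary representation of $m$. Let $P_N(\mathbf{y}\mid\mathbf{x})$ be a channel transition probability from inputs $\mathbf{x}\in\mathbb{F}_q^N$ to outputs $\mathbf{y}$ in a finite set. For an input $\mathbf{x}$ and output $\mathbf{y}$ let $A(\mathbf{x},\mathbf{y})=\{\mathbf{x}'\in\mathbb{F}_q^N: P_N(\mathbf{y}\mid\mathbf{x}')\ge P_N(\mathbf{y}\mid\mathbf{x})\}$. Let $m,m',m''$ be distinct indices, fix a value $\mathbf{x}_m\in\mathbb{F}_q^N$ of the codeword of index $m$ and an output $\mathbf{y}$, and let $A_{j}(\mathbf{x}_m,\mathbf{y})$ denote the event $\{\mathbf{x}_j\in A(\mathbf{x}_m,\mathbf{y})\}$, probabilities being taken over the ensemble conditioned on the codeword of index $m$ being $\mathbf{x}_m$. Let $\alpha=\Pr(A_{m'}(\mathbf{x}_m,\mathbf{y}))$. Then: (i) if $\mathbf{u}_m\notin\mathrm{span}^*(\mathbf{u}_{m'},\mathbf{u}_{m''})$, then $\Pr(A_{m'}(\mathbf{x}_m,\mathbf{y})\cap A_{m''}(\mathbf{x}_m,\mathbf{y}))=\alpha^2$; (ii) if $\mathbf{u}_m\in\mathrm{span}^*(\mathbf{u}_{m'},\mathbf{u}_{m''})$,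 then $\Pr(A_{m'}(\mathbf{x}_m,\mathbf{y})\cap A_{m''}(\mathbf{x}_m,\mathbf{y}))\le\alpha$. Moreover $|\mathrm{span}^*(\mathbf{u}_{m'},\mathbf{u}_{m''})|=q$.
   Context: All operations are mod $q$. $\mathrm{span}^*(\mathbf{w}_1,\mathbf{w}_2)=\mathbf{w}_1+\mathrm{span}(\mathbf{w}_2-\mathbf{w}_1)$, the affine line through $\mathbf{w}_1,\mathbf{w}_2$ in $\mathbb{F}_q^K$. *)

theory Defs
  imports Complex_Main "HOL-Computational_Algebra.Primes"
begin

text \<open>Elements of F_q are naturals below q; vectors of length n over F_q are
functions nat => nat with entries below q at positions < n and 0 elsewhere.\<close>

definition vecs :: "nat \<Rightarrow> nat \<Rightarrow> (nat \<Rightarrow> nat) set" where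
  "vecs q n = {v. (\<forall>i<n. v i < q) \<and> (\<forall>i\<ge>n. v i = 0)}"

definition mats :: "nat \<Rightarrow> nat \<Rightarrow> nat \<Rightarrow> (nat \<Rightarrow> nat \<Rightarrow> nat) set" where
  "mats q K N = {G. \<forall>i j. (i < K \<and> j < N \<longrightarrow> G i j < q) \<and>
                          (\<not> (i < K \<and> j < N) \<longrightarrow> G i j = 0)}"

definition qrep :: "nat \<Rightarrow> nat \<Rightarrow> nat \<Rightarrow> (nat \<Rightarrow> nat)" where
  "qrep q K m = (\<lambda>i. if i < K then (m div q ^ i) mod q else 0)"

definition encode :: "nat \<Rightarrow> nat \<Rightarrow> nat \<Rightarrow> (nat \<Rightarrow> nat \<Rightarrow> nat) \<Rightarrow> (nat \<Rightarrow> nat)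
                      \<Rightarrow> (nat \<Rightarrow> nat) \<Rightarrow> (nat \<Rightarrow> nat)" where
  "encode q K N G v u = (\<lambda>j. if j < N then ((\<Sum>i<K. u i * G i j) + v j) mod q else 0)"

definition ensemble :: "nat \<Rightarrow> nat \<Rightarrow> nat \<Rightarrow> ((nat \<Rightarrow> nat \<Rightarrow> nat) \<times> (nat \<Rightarrow> nat)) set" where
  "ensemble q K N = mats q K N \<times> vecs q N"

definition cond_prob :: "nat \<Rightarrow> nat \<Rightarrow> nat \<Rightarrow> nat \<Rightarrow> (nat \<Rightarrow> nat)
     \<Rightarrow> ((nat \<Rightarrow> nat \<Rightarrow> nat) \<Rightarrow> (nat \<Rightarrow> nat) \<Rightarrow> bool) \<Rightarrow> real" where
  "cond_prob q K N m x0 E =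
     (let C = {(G, v) \<in> ensemble q K N. encode q K N G v (qrep q K m) = x0}
      in real (card {(G, v) \<in> C. E G v}) / real (card C))"

text \<open>A(x,y) = {x' in F_q^N. P(y|x') >= P(y|x)}; P x y stands for P_N(y|x).\<close>
definition Aset :: "nat \<Rightarrow> nat \<Rightarrow> ((nat \<Rightarrow> nat) \<Rightarrow> 'y \<Rightarrow> real) \<Rightarrow> (nat \<Rightarrow> nat) \<Rightarrow> 'y
                    \<Rightarrow> (nat \<Rightarrow> nat) set" where
  "Aset q N P x y = {x' \<in> vecs q N. P x' y \<ge> P x y}"

text \<open>span*(w1,w2) = w1 + span(w2 - w1), all mod q, in F_q^K.\<close>
definition span_star :: "nat \<Rightarrow> nat \<Rightarrow> (nat \<Rightarrow> nat) \<Rightarrow> (nat \<Rightarrow> nat) \<Rightarrow> (nat \<Rightarrow> nat) set" where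
  "span_star q K w1 w2 =
     {(\<lambda>i. if i < K then (w1 i + c * (w2 i + (q - w1 i))) mod q else 0) | c. c < q}"

end

theory Submission
  imports Defs "HOL-Number_Theory.Cong" "HOL-Library.FuncSet"
begin

lemma small_dvd:
  fixes a b q :: nat
  assumes "a < q" "b < q" "int q dvd int a - int b"
  shows "a = b"
proof -
  obtain k where k: "int a - int b = int q * k" using assms(3) by (auto elim: dvdE)
  have "k = 0"
  proof (rule ccontr)
    assume "k \<noteq> 0"
    then have "k \<ge> 1 \<or> k \<le> -1" by auto
    then show False
    proof
      assume "k \<ge> 1" then have "int q * k \<ge> int q" by (simp add: mult_le_cancel_left1)
      then show False using k assms by linarith
    next
      assume "k \<le> -1" then have "int q * k \<le> - int q"
        by (metis mult.right_neutral mult_le_cancel_left mult_minus_right of_nat_0_le_iff not_le order.strict_iff_not)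
      then show False using k assms by linarith
    qed
  qed
  then show ?thesis using k by simp
qed

lemma modeq:
  fixes X w q :: nat
  assumes "int q dvd int X - int w" "w < q"
  shows "X mod q = w"
proof -
  have "int X mod int q = int w mod int q" using assms(1) by (simp add: mod_eq_dvd_iff)
  also have "\<dots> = int w" using assms(2) by simp
  finally have "int (X mod q) = int w" by (simp add: of_nat_mod)
  then show ?thesis by simp
qed

lemma modeq_int:
  fixes X :: int and w q :: nat
  assumes "int q dvd X - int w" "w < q"
  shows "nat (X mod int q) = w"
proof -
  have "X mod int q = int w mod int q" using assms(1) by (simp add: mod_eq_dvd_iff)
  also have "\<dots> = int w" using assms(2) by simp
  finally show ?thesis by simp
qed

lemma inv_ex:
  assumes "prime (q::nat)" "\<not> int q dvd x"
  shows "\<exists>y. int q dvd x*y - 1"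
proof -
  have p: "prime (int q)" using assms(1) by simp
  have "coprime x (int q)"
    using prime_imp_coprime[OF p] assms(2) coprime_commute by blast
  then obtain y where "[x*y = 1] (mod int q)" using cong_solve_coprime_int by blast
  then show ?thesis unfolding cong_def by (auto simp: mod_eq_dvd_iff)
qed

definition sp :: "nat \<Rightarrow> nat \<Rightarrow> (nat \<Rightarrow> nat) \<Rightarrow> (nat \<Rightarrow> nat) \<Rightarrow> nat \<Rightarrow> (nat \<Rightarrow> nat)" where
  "sp q K w1 w2 c = (\<lambda>i. if i < K then (w1 i + c * (w2 i + (q - w1 i))) mod q else 0)"

lemma span_star_sp: "span_star q K w1 w2 = sp q K w1 w2 ` {..<q}"
  unfolding span_star_def sp_def by auto

lemma sp_int: "w1 i < q \<Longrightarrow> int (w1 i + c * (w2 i + (q - w1 i))) = int (w1 i) + int c * (int (w2 i) - int (w1 i) + int q)"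
  by (simp add: of_nat_diff)

lemma card_span:
  assumes "prime q" "\<forall>i<K. w1 i < q \<and> w2 i < q" "i0 < K" "w1 i0 \<noteq> w2 i0"
  shows "card (span_star q K w1 w2) = q"
proof -
  have "inj_on (sp q K w1 w2) {..<q}"
  proof
    fix c1 c2 assume c: "c1 \<in> {..<q}" "c2 \<in> {..<q}" "sp q K w1 w2 c1 = sp q K w1 w2 c2"
    let ?d = "int (w2 i0) - int (w1 i0)"
    have "(w1 i0 + c1 * (w2 i0 + (q - w1 i0))) mod q = (w1 i0 + c2 * (w2 i0 + (q - w1 i0))) mod q"
      using c(3) assms(3) unfolding sp_def by (metis (mono_tags, lifting))
    then have "int q dvd int (w1 i0 + c1 * (w2 i0 + (q - w1 i0))) - int (w1 i0 + c2 * (w2 i0 + (q - w1 i0)))"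
      by (metis mod_eq_dvd_iff of_nat_mod)
    moreover have e: "\<And>c. int (w1 i0 + c * (w2 i0 + (q - w1 i0))) = int (w1 i0) + int c * (?d + int q)"
      using sp_int[of w1 i0 q] assms(2,3) by (simp add: algebra_simps)
    ultimately have "int q dvd (int c1 - int c2) * ?d + (int c1 - int c2) * int q"
      unfolding e by (simp add: algebra_simps)
    then have "int q dvd (int c1 - int c2) * ?d"
      by (metis dvd_add_left_iff dvd_triv_right mult.commute)
    moreover have "\<not> int q dvd ?d"
    proof
      assume "int q dvd ?d"
      then have "w2 i0 = w1 i0" using small_dvd assms(2,3) by blast
      then show False using assms(4) by simp
    qed
    moreover have "prime (int q)" using assms(1) by simp
    ultimately have "int q dvd int c1 - int c2" using prime_dvd_mult_iff by blast
    then show "c1 = c2" using small_dvd c(1,2) by auto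
  qed
  then show ?thesis unfolding span_star_sp by (simp add: card_image)
qed

lemma dvd_neg_swap: "(n::int) dvd x - y \<Longrightarrow> n dvd y - x"
  by (metis dvd_minus_iff minus_diff_eq)

lemma minor:
  fixes q K :: nat and um u1 u2 :: "nat \<Rightarrow> nat"
  assumes pq: "prime q" and bnd: "\<forall>i<K. um i < q \<and> u1 i < q \<and> u2 i < q"
    and zer: "\<forall>i\<ge>K. um i = 0 \<and> u1 i = 0 \<and> u2 i = 0"
    and nsp: "um \<notin> span_star q K u1 u2" and n1: "um \<noteq> u1" and n12: "u1 \<noteq> u2"
  shows "\<exists>i k. i<K \<and> k<K \<and> \<not> int q dvd (int (u1 i) - int (um i)) * (int (u2 k) - int (um k))
                 - (int (u1 k) - int (um k)) * (int (u2 i) - int (um i))"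
proof (rule ccontr)
  define a where "a = (\<lambda>i. int (u1 i) - int (um i))"
  define b where "b = (\<lambda>i. int (u2 i) - int (um i))"
  assume "\<not> ?thesis"
  then have H: "\<And>i k. i < K \<Longrightarrow> k < K \<Longrightarrow> int q dvd a i * b k - a k * b i"
    unfolding a_def b_def by blast
  have q0: "q > 0" using pq prime_gt_0_nat by blast
  obtain i0 where i0: "um i0 \<noteq> u1 i0" using n1 by auto
  have i0K: "i0 < K" using i0 zer not_le by metis
  have na: "\<not> int q dvd a i0"
  proof
    assume "int q dvd a i0"
    then have "u1 i0 = um i0" using small_dvd bnd i0K unfolding a_def by blast
    then show False using i0 by simp
  qed
  obtain y where y: "int q dvd a i0 * y - 1" using inv_ex[OF pq na] by blast
  define l where "l = b i0 * y"
  have hb: "int q dvd b k - l * a k" if k: "k < K" for k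
  proof -
    have "b k - l * a k = b k * (1 - a i0 * y) + y * (a i0 * b k - a k * b i0)"
      unfolding l_def by (simp add: algebra_simps)
    moreover have "int q dvd b k * (1 - a i0 * y)" using dvd_neg_swap[OF y] by simp
    moreover have "int q dvd y * (a i0 * b k - a k * b i0)" using H[OF i0K k] by simp
    ultimately show ?thesis by simp
  qed
  have nl: "\<not> int q dvd 1 - l"
  proof
    assume l1: "int q dvd 1 - l"
    have "u2 k = u1 k" for k
    proof (cases "k < K")
      case True
      have "int (u2 k) - int (u1 k) = (b k - l * a k) - (1 - l) * a k"
        unfolding a_def b_def by (simp add: algebra_simps)
      moreover have "int q dvd (b k - l * a k) - (1 - l) * a k"
        using hb[OF True] l1 by simp
      ultimately show ?thesis using small_dvd bnd True by metis
    next
      case False then show ?thesis using zer by simp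
    qed
    then show False using n12 by auto
  qed
  obtain z where z: "int q dvd (1 - l) * z - 1" using inv_ex[OF pq nl] by blast
  define c where "c = nat (z mod int q)"
  have cq: "c < q" unfolding c_def using q0
    by (simp add: nat_less_iff)
  have ci: "int c = z mod int q" unfolding c_def using q0 by simp
  have cz: "int q dvd int c - z" unfolding ci using mod_eq_dvd_iff[of "z mod int q" "int q" z] by simp
  have "um = sp q K u1 u2 c"
  proof
    fix i show "um i = sp q K u1 u2 c i"
    proof (cases "i < K")
      case True
      have e: "int (u1 i + c * (u2 i + (q - u1 i))) - int (um i)
            = a i * (1 - z * (1 - l)) + z * (b i - l * a i) + (int c - z) * (b i - a i) + int c * int q"
        using sp_int[of u1 i q c u2] bnd True unfolding a_def b_def by (simp add: algebra_simps)
      have "int q dvd a i * (1 - z * (1 - l))"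
        using dvd_neg_swap[OF z] by (simp add: mult.commute)
      moreover have "int q dvd z * (b i - l * a i)" using hb[OF True] by simp
      moreover have "int q dvd (int c - z) * (b i - a i)" using cz by simp
      ultimately have "int q dvd int (u1 i + c * (u2 i + (q - u1 i))) - int (um i)"
        unfolding e by simp
      then have "(u1 i + c * (u2 i + (q - u1 i))) mod q = um i"
        using modeq bnd True by blast
      then show ?thesis unfolding sp_def using True by simp
    next
      case False then show ?thesis unfolding sp_def using zer by simp
    qed
  qed
  then have "um \<in> span_star q K u1 u2" unfolding span_star_sp using cq by auto
  then show False using nsp by simp
qed

definition Tr :: "nat \<Rightarrow> nat \<Rightarrow> nat \<Rightarrow> (nat \<Rightarrow> nat \<Rightarrow> nat) \<Rightarrow> (nat \<Rightarrow> nat)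
   \<Rightarrow> (nat \<Rightarrow> nat \<Rightarrow> nat) \<times> (nat \<Rightarrow> nat) \<Rightarrow> (nat \<Rightarrow> nat \<Rightarrow> nat) \<times> (nat \<Rightarrow> nat)" where
  "Tr q K N D E = (\<lambda>(G,v). ((\<lambda>i j. if i<K \<and> j<N then (G i j + D i j) mod q else 0),
                            (\<lambda>j. if j<N then (v j + E j) mod q else 0)))"

lemma Tr_ens: "0 < q \<Longrightarrow> x \<in> ensemble q K N \<Longrightarrow> Tr q K N D E x \<in> ensemble q K N"
  unfolding Tr_def ensemble_def mats_def vecs_def by (auto split: prod.splits)

lemma Tr_inj: "inj_on (Tr q K N D E) (ensemble q K N)"
proof
  fix x y assume x: "x \<in> ensemble q K N" and y: "y \<in> ensemble q K N"
    and e: "Tr q K N D E x = Tr q K N D E y"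
  obtain G v where xv: "x = (G, v)" by (cases x)
  obtain G' v' where yv: "y = (G', v')" by (cases y)
  have G: "G = G'"
  proof (intro ext)
    fix i j show "G i j = G' i j"
    proof (cases "i < K \<and> j < N")
      case True
      have "(G i j + D i j) mod q = (G' i j + D i j) mod q"
        using e True unfolding xv yv Tr_def by (simp add: fun_eq_iff) (metis)
      then have "int ((G i j + D i j) mod q) = int ((G' i j + D i j) mod q)" by simp
      then have "(int (G i j) + int (D i j)) mod int q = (int (G' i j) + int (D i j)) mod int q"
        by (simp add: of_nat_mod)
      then have "int q dvd (int (G i j) + int (D i j)) - (int (G' i j) + int (D i j))"
        by (simp only: mod_eq_dvd_iff)
      then have "int q dvd int (G i j) - int (G' i j)" by simp
      moreover have "G i j < q" "G' i j < q" using x y True unfolding xv yv ensemble_def mats_def by auto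
      ultimately show ?thesis using small_dvd by blast
    next
      case False then show ?thesis using x y unfolding xv yv ensemble_def mats_def by auto
    qed
  qed
  have v: "v = v'"
  proof
    fix j show "v j = v' j"
    proof (cases "j < N")
      case True
      have "(v j + E j) mod q = (v' j + E j) mod q"
        using e True unfolding xv yv Tr_def by (simp add: fun_eq_iff) (metis)
      then have "int ((v j + E j) mod q) = int ((v' j + E j) mod q)" by simp
      then have "(int (v j) + int (E j)) mod int q = (int (v' j) + int (E j)) mod int q"
        by (simp add: of_nat_mod)
      then have "int q dvd (int (v j) + int (E j)) - (int (v' j) + int (E j))"
        by (simp only: mod_eq_dvd_iff)
      then have "int q dvd int (v j) - int (v' j)" by simp
      moreover have "v j < q" "v' j < q" using x y True unfolding xv yv ensemble_def vecs_def by auto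
      ultimately show ?thesis using small_dvd by blast
    next
      case False then show ?thesis using x y unfolding xv yv ensemble_def vecs_def by auto
    qed
  qed
  show "x = y" using G v xv yv by simp
qed

lemma encode_Tr:
  assumes "j < N"
  shows "encode q K N (fst (Tr q K N D E (G,v))) (snd (Tr q K N D E (G,v))) u j
       = (encode q K N G v u j + (\<Sum>i<K. u i * D i j) + E j) mod q"
proof -
  have s: "(\<Sum>i<K. u i * ((G i j + D i j) mod q)) mod q = (\<Sum>i<K. u i * G i j + u i * D i j) mod q"
  proof -
    have "(\<Sum>i<K. u i * ((G i j + D i j) mod q)) mod q = (\<Sum>i<K. (u i * ((G i j + D i j) mod q)) mod q) mod q"
      by (simp add: mod_sum_eq)
    also have "\<dots> = (\<Sum>i<K. (u i * (G i j + D i j)) mod q) mod q"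
      by (simp add: mod_mult_right_eq)
    also have "\<dots> = (\<Sum>i<K. u i * (G i j + D i j)) mod q"
      by (simp add: mod_sum_eq)
    finally show ?thesis by (simp add: algebra_simps)
  qed
  have sk: "(\<Sum>i<K. u i * (if i < K \<and> j < N then (G i j + D i j) mod q else 0)) = (\<Sum>i<K. u i * ((G i j + D i j) mod q))"
    using assms by (intro sum.cong) auto
  have "encode q K N (fst (Tr q K N D E (G,v))) (snd (Tr q K N D E (G,v))) u j
      = ((\<Sum>i<K. u i * ((G i j + D i j) mod q)) + (v j + E j) mod q) mod q"
    using assms unfolding encode_def Tr_def by (simp add: sk)
  also have "\<dots> = ((\<Sum>i<K. u i * ((G i j + D i j) mod q)) mod q + (v j + E j) mod q) mod q"
    by (simp only: mod_add_left_eq)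
  also have "\<dots> = ((\<Sum>i<K. u i * G i j + u i * D i j) mod q + (v j + E j) mod q) mod q"
    by (simp only: s)
  also have "\<dots> = ((\<Sum>i<K. u i * G i j + u i * D i j) + (v j + E j)) mod q"
    by (rule mod_add_eq)
  also have "\<dots> = (((\<Sum>i<K. u i * G i j) + v j) + (\<Sum>i<K. u i * D i j) + E j) mod q"
    by (simp add: sum.distrib algebra_simps)
  also have "\<dots> = ((((\<Sum>i<K. u i * G i j) + v j) mod q) + (\<Sum>i<K. u i * D i j) + E j) mod q"
    by (metis (no_types, lifting) group_cancel.add1 mod_add_left_eq)
  finally show ?thesis using assms unfolding encode_def by simp
qed

lemma sumD:
  fixes K i k :: nat
  assumes "i < K" "k < K" "i \<noteq> k"
  shows "(\<Sum>l<K. u l * ((if l = i then X else 0) + (if l = k then Y else 0))) = u i * X + u k * (Y::nat)"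
proof -
  have "(\<Sum>l<K. u l * ((if l = i then X else 0) + (if l = k then Y else 0)))
     = (\<Sum>l<K. (if l = i then u i * X else 0) + (if l = k then u k * Y else 0))"
    using assms by (intro sum.cong) (auto simp: distrib_left)
  also have "\<dots> = (\<Sum>l<K. (if l = i then u i * X else 0)) + (\<Sum>l<K. (if l = k then u k * Y else 0))"
    by (rule sum.distrib)
  also have "\<dots> = u i * X + u k * Y"
    using assms by simp
  finally show ?thesis .
qed

lemma solve:
  fixes q K N i k :: nat and um u1 u2 x0 w1 w2 w1' w2' :: "nat \<Rightarrow> nat"
  defines "a \<equiv> \<lambda>i. int (u1 i) - int (um i)" and "b \<equiv> \<lambda>i. int (u2 i) - int (um i)"
  assumes pq: "prime q" and iK: "i < K" and kK: "k < K"
    and det: "\<not> int q dvd a i * b k - a k * b i"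
    and bnd: "\<forall>j<N. x0 j < q \<and> w1' j < q \<and> w2' j < q"
  shows "\<exists>D E. \<forall>j<N. (x0 j + (\<Sum>l<K. um l * D l j) + E j) mod q = x0 j
              \<and> (w1 j + (\<Sum>l<K. u1 l * D l j) + E j) mod q = w1' j
              \<and> (w2 j + (\<Sum>l<K. u2 l * D l j) + E j) mod q = w2' j"
proof -
  have ik: "i \<noteq> k" using det by auto
  have q0: "q > 0" using pq prime_gt_0_nat by blast
  obtain dinv where dinv: "int q dvd (a i * b k - a k * b i) * dinv - 1"
    using inv_ex[OF pq det] by blast
  define s where "s = (\<lambda>j. int (w1' j) - int (w1 j))"
  define t where "t = (\<lambda>j. int (w2' j) - int (w2 j))"
  define DIr where "DIr = (\<lambda>j. (b k * s j - a k * t j) * dinv)"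
  define DKr where "DKr = (\<lambda>j. (a i * t j - b i * s j) * dinv)"
  define DI where "DI = (\<lambda>j. DIr j mod int q)"
  define DK where "DK = (\<lambda>j. DKr j mod int q)"
  define D where "D = (\<lambda>l j. (if l = i then nat (DI j) else 0) + (if l = k then nat (DK j) else 0))"
  define P where "P = (\<lambda>j. int (um i) * DI j + int (um k) * DK j)"
  define E where "E = (\<lambda>j. nat ((- P j) mod int q))"
  have DIn: "int (nat (DI j)) = DI j" for j unfolding DI_def using q0 by simp
  have DKn: "int (nat (DK j)) = DK j" for j unfolding DK_def using q0 by simp
  have En: "int (E j) = (- P j) mod int q" for j unfolding E_def using q0 by simp
  have modd: "int q dvd (x mod int q) - x" for x :: int
    using mod_eq_dvd_iff[of "x mod int q" "int q" x] by simp
  have dI: "int q dvd DI j - DIr j" for j unfolding DI_def by (rule modd)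
  have dK: "int q dvd DK j - DKr j" for j unfolding DK_def by (rule modd)
  have dE: "int q dvd int (E j) + P j" for j
    using modd[of "- P j"] unfolding En by simp
  have sumi: "int (\<Sum>l<K. u l * D l j) = int (u i) * DI j + int (u k) * DK j" for u j
  proof -
    have "(\<Sum>l<K. u l * D l j) = u i * nat (DI j) + u k * nat (DK j)"
      unfolding D_def by (rule sumD[OF iK kK ik])
    then show ?thesis using DIn DKn by simp
  qed
  have "\<forall>j<N. (x0 j + (\<Sum>l<K. um l * D l j) + E j) mod q = x0 j
              \<and> (w1 j + (\<Sum>l<K. u1 l * D l j) + E j) mod q = w1' j
              \<and> (w2 j + (\<Sum>l<K. u2 l * D l j) + E j) mod q = w2' j"
  proof (intro allI impI conjI)
    fix j assume j: "j < N"
    have "int (x0 j + (\<Sum>l<K. um l * D l j) + E j) - int (x0 j) = int (E j) + P j"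
      unfolding P_def using sumi[of um j] by (simp only: of_nat_add)
    then have "int q dvd int (x0 j + (\<Sum>l<K. um l * D l j) + E j) - int (x0 j)"
      using dE[of j] by (simp add: add.commute)
    then show "(x0 j + (\<Sum>l<K. um l * D l j) + E j) mod q = x0 j"
      using modeq bnd j by blast
  next
    fix j assume j: "j < N"
    have eq: "int (w1 j + (\<Sum>l<K. u1 l * D l j) + E j) - int (w1' j)
        = a i * (DI j - DIr j) + a k * (DK j - DKr j) + s j * ((a i * b k - a k * b i) * dinv - 1)
          + (int (E j) + P j)"
    proof -
      have sub: "int (w1 j + (\<Sum>l<K. u1 l * D l j) + E j) = int (w1 j) + (int (u1 i) * DI j + int (u1 k) * DK j) + int (E j)"
        using sumi[of u1 j] by simp
      show ?thesis unfolding sub P_def DIr_def DKr_def s_def a_def b_def by algebra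
    qed
    have h1: "int q dvd a i * (DI j - DIr j)" using dI by simp
    have h2: "int q dvd a k * (DK j - DKr j)" using dK by simp
    have h3: "int q dvd s j * ((a i * b k - a k * b i) * dinv - 1)" using dinv by simp
    have "int q dvd int (w1 j + (\<Sum>l<K. u1 l * D l j) + E j) - int (w1' j)"
      unfolding eq by (rule dvd_add[OF dvd_add[OF dvd_add[OF h1 h2] h3] dE])
    then show "(w1 j + (\<Sum>l<K. u1 l * D l j) + E j) mod q = w1' j"
      using modeq bnd j by blast
  next
    fix j assume j: "j < N"
    have eq: "int (w2 j + (\<Sum>l<K. u2 l * D l j) + E j) - int (w2' j)
        = b i * (DI j - DIr j) + b k * (DK j - DKr j) + t j * ((a i * b k - a k * b i) * dinv - 1)
          + (int (E j) + P j)"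
    proof -
      have sub: "int (w2 j + (\<Sum>l<K. u2 l * D l j) + E j) = int (w2 j) + (int (u2 i) * DI j + int (u2 k) * DK j) + int (E j)"
        using sumi[of u2 j] by simp
      show ?thesis unfolding sub P_def DIr_def DKr_def t_def a_def b_def by algebra
    qed
    have h1: "int q dvd b i * (DI j - DIr j)" using dI by simp
    have h2: "int q dvd b k * (DK j - DKr j)" using dK by simp
    have h3: "int q dvd t j * ((a i * b k - a k * b i) * dinv - 1)" using dinv by simp
    have "int q dvd int (w2 j + (\<Sum>l<K. u2 l * D l j) + E j) - int (w2' j)"
      unfolding eq by (rule dvd_add[OF dvd_add[OF dvd_add[OF h1 h2] h3] dE])
    then show "(w2 j + (\<Sum>l<K. u2 l * D l j) + E j) mod q = w2' j"
      using modeq bnd j by blast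
  qed
  then show ?thesis by blast
qed

lemma finite_vecs: "finite (vecs q n)"
proof -
  have "vecs q n \<subseteq> (\<lambda>f i. if i < n then f i else 0) ` (\<Pi>\<^sub>E i\<in>{..<n}. {..<q})"
  proof
    fix v assume v: "v \<in> vecs q n"
    show "v \<in> (\<lambda>f i. if i < n then f i else 0) ` (\<Pi>\<^sub>E i\<in>{..<n}. {..<q})"
      apply (rule image_eqI[where x="restrict v {..<n}"])
      using v by (auto simp: vecs_def)
  qed
  then show ?thesis by (rule finite_subset) (auto intro: finite_PiE)
qed

lemma finite_mats: "finite (mats q K N)"
proof -
  have "mats q K N \<subseteq> (\<lambda>f i j. if i < K \<and> j < N then f (i,j) else 0) ` (\<Pi>\<^sub>E p\<in>{..<K}\<times>{..<N}. {..<q})"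
  proof
    fix v assume v: "v \<in> mats q K N"
    show "v \<in> (\<lambda>f i j. if i < K \<and> j < N then f (i,j) else 0) ` (\<Pi>\<^sub>E p\<in>{..<K}\<times>{..<N}. {..<q})"
      apply (rule image_eqI[where x="restrict (\<lambda>(i,j). v i j) ({..<K}\<times>{..<N})"])
      using v by (auto simp: mats_def fun_eq_iff)
  qed
  then show ?thesis by (rule finite_subset) (auto intro: finite_PiE)
qed

lemma digits_sum: "(m::nat) mod q ^ K = (\<Sum>i<K. ((m div q ^ i) mod q) * q ^ i)"
proof (induction K)
  case 0 then show ?case by simp
next
  case (Suc K)
  have "m mod q ^ Suc K = m mod (q^K * q)" by (simp add: mult.commute)
  also have "\<dots> = q^K * (m div q^K mod q) + m mod q^K" by (rule mod_mult2_eq)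
  finally show ?case using Suc by (simp add: algebra_simps)
qed

lemma qrep_inj:
  assumes "m < q^K" "m' < q^K" "qrep q K m = qrep q K m'"
  shows "m = m'"
proof -
  have "\<forall>i<K. (m div q ^ i) mod q = (m' div q ^ i) mod q"
    using assms(3) unfolding qrep_def by (metis)
  then have "(\<Sum>i<K. ((m div q ^ i) mod q) * q ^ i) = (\<Sum>i<K. ((m' div q ^ i) mod q) * q ^ i)"
    by simp
  then show ?thesis using digits_sum[of m q K] digits_sum[of m' q K] assms(1,2) by simp
qed

lemma count_lemma:
  fixes C :: "'a set" and f1 f2 :: "'a \<Rightarrow> 'b"
  assumes "finite C" "finite V" "S \<subseteq> V" "\<forall>x\<in>C. f1 x \<in> V \<and> f2 x \<in> V"
    and eq: "\<And>w1 w2 w1' w2'. w1 \<in> V \<Longrightarrow> w2 \<in> V \<Longrightarrow> w1' \<in> V \<Longrightarrow> w2' \<in> V \<Longrightarrow>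
        card {x\<in>C. f1 x = w1 \<and> f2 x = w2} \<le> card {x\<in>C. f1 x = w1' \<and> f2 x = w2'}"
  shows "real (card {x\<in>C. f1 x \<in> S \<and> f2 x \<in> S}) / real (card C)
        = (real (card {x\<in>C. f1 x \<in> S}) / real (card C))^2"
proof (cases "V = {}")
  case True then have "C = {}" using assms(4) by auto
  then show ?thesis by simp
next
  case False
  then obtain w0 where w0: "w0 \<in> V" by auto
  define c where "c = card {x\<in>C. f1 x = w0 \<and> f2 x = w0}"
  have fib: "card {x\<in>C. f1 x = w1 \<and> f2 x = w2} = c" if "w1 \<in> V" "w2 \<in> V" for w1 w2
    unfolding c_def using eq[OF that w0 w0] eq[OF w0 w0 that] by simp
  have gen: "card {x\<in>C. (f1 x, f2 x) \<in> T} = card T * c" if T: "T \<subseteq> V \<times> V" for T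
  proof -
    have fT: "finite T" using T assms(2) finite_subset by blast
    have "{x\<in>C. (f1 x, f2 x) \<in> T} = (\<Union>w\<in>T. {x\<in>C. f1 x = fst w \<and> f2 x = snd w})"
      by auto
    then have "card {x\<in>C. (f1 x, f2 x) \<in> T} = (\<Sum>w\<in>T. card {x\<in>C. f1 x = fst w \<and> f2 x = snd w})"
      using card_UN_disjoint[OF fT] assms(1) by (auto intro!: card_UN_disjoint[OF fT])
    also have "\<dots> = (\<Sum>w\<in>T. c)"
      using T by (intro sum.cong) (auto intro!: fib)
    finally show ?thesis by simp
  qed
  have e1: "{x\<in>C. f1 x \<in> S \<and> f2 x \<in> S} = {x\<in>C. (f1 x, f2 x) \<in> S \<times> S}" by auto
  have e2: "{x\<in>C. f1 x \<in> S} = {x\<in>C. (f1 x, f2 x) \<in> S \<times> V}" using assms(4) by auto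
  have e3: "C = {x\<in>C. (f1 x, f2 x) \<in> V \<times> V}" using assms(4) by auto
  have c1: "card {x\<in>C. f1 x \<in> S \<and> f2 x \<in> S} = card S * card S * c"
  proof -
    have cp: "card (S \<times> S) = card S * card S" by (rule card_cartesian_product)
    have ss: "S \<times> S \<subseteq> V \<times> V" using assms(3) by blast
    have g: "card {x\<in>C. (f1 x, f2 x) \<in> S \<times> S} = card (S \<times> S) * c" using ss by (rule gen)
    show ?thesis by (simp only: e1 g cp)
  qed
  have c2: "card {x\<in>C. f1 x \<in> S} = card S * card V * c"
  proof -
    have cp: "card (S \<times> V) = card S * card V" by (rule card_cartesian_product)
    have ss: "S \<times> V \<subseteq> V \<times> V" using assms(3) by blast
    have g: "card {x\<in>C. (f1 x, f2 x) \<in> S \<times> V} = card (S \<times> V) * c" using ss by (rule gen)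
    show ?thesis by (simp only: e2 g cp)
  qed
  have c3: "card C = card V * card V * c"
  proof -
    have cp: "card (V \<times> V) = card V * card V" by (rule card_cartesian_product)
    have g: "card {x\<in>C. (f1 x, f2 x) \<in> V \<times> V} = card (V \<times> V) * c" by (rule gen) simp
    have "card C = card {x\<in>C. (f1 x, f2 x) \<in> V \<times> V}" using e3 by (rule arg_cong)
    then show ?thesis using g cp by simp
  qed
  have V0: "card V > 0" using False assms(2) by (simp add: card_gt_0_iff)
  show ?thesis
  proof (cases "c = 0")
    case True then show ?thesis using c1 c2 c3 by simp
  next
    case False
    define s where "s = real (card S)"
    define v where "v = real (card V)"
    define cc where "cc = real c"
    have v0: "v \<noteq> 0" using V0 v_def by simp
    have cc0: "cc \<noteq> 0" using False cc_def by simp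
    have r1: "real (card {x\<in>C. f1 x \<in> S \<and> f2 x \<in> S}) / real (card C) = (s*s*cc)/(v*v*cc)"
      using c1 c3 s_def v_def cc_def by simp
    have r2: "real (card {x\<in>C. f1 x \<in> S}) / real (card C) = (s*v*cc)/(v*v*cc)"
      using c2 c3 s_def v_def cc_def by simp
    have "(s*s*cc)/(v*v*cc) = ((s*v*cc)/(v*v*cc))^2"
      using v0 cc0 by (simp add: power2_eq_square)
    then show ?thesis using r1 r2 by simp
  qed
qed

lemma enc_eq:
  assumes "\<forall>j<N. (w j + (\<Sum>l<K. u l * D l j) + E j) mod q = w' j"
    and "encode q K N G v u = w" and "w' \<in> vecs q N"
  shows "encode q K N (fst (Tr q K N D E (G,v))) (snd (Tr q K N D E (G,v))) u = w'"
proof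
  fix j show "encode q K N (fst (Tr q K N D E (G,v))) (snd (Tr q K N D E (G,v))) u j = w' j"
  proof (cases "j < N")
    case True then show ?thesis using encode_Tr[OF True, of q K D E G v u] assms by auto
  next
    case False then show ?thesis using assms(3) unfolding encode_def vecs_def by auto
  qed
qed

lemma encode_vecs: "0 < q \<Longrightarrow> encode q K N G v u \<in> vecs q N"
  unfolding encode_def vecs_def by auto

lemma qrep_bnd: "0 < q \<Longrightarrow> i < K \<Longrightarrow> qrep q K m i < q"
  unfolding qrep_def by simp

lemma qrep_zero: "i \<ge> K \<Longrightarrow> qrep q K m i = 0"
  unfolding qrep_def by simp

theorem lemma1:
  fixes q K N :: nat
    and P :: "(nat \<Rightarrow> nat) \<Rightarrow> 'y::finite \<Rightarrow> real"
    and m m' m'' :: nat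
    and x0 :: "nat \<Rightarrow> nat"
    and y :: "'y"
  assumes "prime q" and "1 \<le> K" and "K < N" and "q ^ K > 2"
    and "\<forall>x\<in>vecs q N. (\<forall>z. P x z \<ge> 0) \<and> (\<Sum>z\<in>UNIV. P x z) = 1"
    and "m < q ^ K" and "m' < q ^ K" and "m'' < q ^ K"
    and "m \<noteq> m'" and "m \<noteq> m''" and "m' \<noteq> m''"
    and "x0 \<in> vecs q N"
  defines "A' \<equiv> (\<lambda>G v. encode q K N G v (qrep q K m') \<in> Aset q N P x0 y)"
    and "A'' \<equiv> (\<lambda>G v. encode q K N G v (qrep q K m'') \<in> Aset q N P x0 y)"
    and "\<alpha> \<equiv> cond_prob q K N m x0 (\<lambda>G v. encode q K N G v (qrep q K m') \<in> Aset q N P x0 y)"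
  shows "(qrep q K m \<notin> span_star q K (qrep q K m') (qrep q K m'') \<longrightarrow>
            cond_prob q K N m x0 (\<lambda>G v. A' G v \<and> A'' G v) = \<alpha> ^ 2)
       \<and> (qrep q K m \<in> span_star q K (qrep q K m') (qrep q K m'') \<longrightarrow>
            cond_prob q K N m x0 (\<lambda>G v. A' G v \<and> A'' G v) \<le> \<alpha>)
       \<and> card (span_star q K (qrep q K m') (qrep q K m'')) = q"
proof -
  define um where "um = qrep q K m"
  define u1 where "u1 = qrep q K m'"
  define u2 where "u2 = qrep q K m''"
  have pq: "prime q" by fact
  have q0: "q > 0" using pq prime_gt_0_nat by blast
  have bnd: "\<forall>i<K. um i < q \<and> u1 i < q \<and> u2 i < q"
    unfolding um_def u1_def u2_def using qrep_bnd q0 by blast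
  have zer: "\<forall>i\<ge>K. um i = 0 \<and> u1 i = 0 \<and> u2 i = 0"
    unfolding um_def u1_def u2_def using qrep_zero by blast
  have n1: "um \<noteq> u1" unfolding um_def u1_def using qrep_inj assms(6,7,9) by blast
  have n2: "um \<noteq> u2" unfolding um_def u2_def using qrep_inj assms(6,8,10) by blast
  have n12: "u1 \<noteq> u2" unfolding u1_def u2_def using qrep_inj assms(7,8,11) by blast
  define C where "C = {(G, v) \<in> ensemble q K N. encode q K N G v um = x0}"
  have finC: "finite C"
  proof -
    have "finite (ensemble q K N)" unfolding ensemble_def using finite_mats finite_vecs by blast
    then show ?thesis unfolding C_def by (rule rev_finite_subset) auto
  qed
  have cp: "cond_prob q K N m x0 E = real (card {(G, v) \<in> C. E G v}) / real (card C)" for E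
    unfolding cond_prob_def C_def um_def Let_def by simp
  have p3: "card (span_star q K u1 u2) = q"
  proof -
    obtain i0 where i0: "u1 i0 \<noteq> u2 i0" using n12 by auto
    have i0K: "i0 < K" using i0 zer not_le by metis
    have b2: "\<forall>i<K. u1 i < q \<and> u2 i < q" using bnd by blast
    show ?thesis by (rule card_span[OF pq b2 i0K i0])
  qed
  have p2: "cond_prob q K N m x0 (\<lambda>G v. A' G v \<and> A'' G v) \<le> \<alpha>"
  proof -
    have "card {(G, v) \<in> C. A' G v \<and> A'' G v} \<le> card {(G, v) \<in> C. A' G v}"
    proof (rule card_mono)
      show "finite {(G, v) \<in> C. A' G v}" by (rule rev_finite_subset[OF finC]) auto
    qed auto
    then have "real (card {(G, v) \<in> C. A' G v \<and> A'' G v}) / real (card C)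
             \<le> real (card {(G, v) \<in> C. A' G v}) / real (card C)"
      by (simp add: divide_right_mono)
    then show ?thesis unfolding \<alpha>_def cp A'_def by simp
  qed
  have p1: "cond_prob q K N m x0 (\<lambda>G v. A' G v \<and> A'' G v) = \<alpha> ^ 2"
    if nsp: "um \<notin> span_star q K u1 u2"
  proof -
    obtain i k where ik: "i < K" "k < K"
      "\<not> int q dvd (int (u1 i) - int (um i)) * (int (u2 k) - int (um k))
                 - (int (u1 k) - int (um k)) * (int (u2 i) - int (um i))"
      using minor[OF pq bnd zer nsp n1 n12] by blast
    define S where "S = Aset q N P x0 y"
    define V where "V = vecs q N"
    define f1 where "f1 = (\<lambda>x. encode q K N (fst x) (snd x) u1)"
    define f2 where "f2 = (\<lambda>x. encode q K N (fst x) (snd x) u2)"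
    have SV: "S \<subseteq> V" unfolding S_def V_def Aset_def by auto
    have fV: "\<forall>x\<in>C. f1 x \<in> V \<and> f2 x \<in> V"
      unfolding f1_def f2_def V_def using encode_vecs q0 by blast
    have finV: "finite V" unfolding V_def by (rule finite_vecs)
    have eq: "card {x\<in>C. f1 x = w1 \<and> f2 x = w2} \<le> card {x\<in>C. f1 x = w1' \<and> f2 x = w2'}"
      if w: "w1 \<in> V" "w2 \<in> V" "w1' \<in> V" "w2' \<in> V" for w1 w2 w1' w2'
    proof -
      have b0: "\<forall>j<N. x0 j < q \<and> w1' j < q \<and> w2' j < q"
        using w assms(12) unfolding V_def vecs_def by auto
      obtain D E where DE: "\<forall>j<N. (x0 j + (\<Sum>l<K. um l * D l j) + E j) mod q = x0 j
              \<and> (w1 j + (\<Sum>l<K. u1 l * D l j) + E j) mod q = w1' j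
              \<and> (w2 j + (\<Sum>l<K. u2 l * D l j) + E j) mod q = w2' j"
        using solve[OF pq ik b0, of w1 w2] by blast
      show ?thesis
      proof (rule card_inj_on_le)
        show "inj_on (Tr q K N D E) {x\<in>C. f1 x = w1 \<and> f2 x = w2}"
          by (rule inj_on_subset[OF Tr_inj]) (auto simp: C_def)
        show "finite {x\<in>C. f1 x = w1' \<and> f2 x = w2'}" using finC by simp
        show "Tr q K N D E ` {x\<in>C. f1 x = w1 \<and> f2 x = w2} \<subseteq> {x\<in>C. f1 x = w1' \<and> f2 x = w2'}"
        proof
          fix z assume "z \<in> Tr q K N D E ` {x\<in>C. f1 x = w1 \<and> f2 x = w2}"
          then obtain G v where Gv: "(G,v) \<in> C" "f1 (G,v) = w1" "f2 (G,v) = w2"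
            and z: "z = Tr q K N D E (G,v)" by auto
          have ens: "(G,v) \<in> ensemble q K N" and e0: "encode q K N G v um = x0"
            using Gv(1) unfolding C_def by auto
          have "z \<in> ensemble q K N" unfolding z using Tr_ens[OF q0 ens] .
          moreover have "encode q K N (fst z) (snd z) um = x0"
            unfolding z by (rule enc_eq) (use DE e0 assms(12) in auto)
          moreover have "f1 z = w1'"
            unfolding z f1_def by (rule enc_eq) (use DE Gv(2) w(3) in \<open>auto simp: f1_def V_def\<close>)
          moreover have "f2 z = w2'"
            unfolding z f2_def by (rule enc_eq) (use DE Gv(3) w(4) in \<open>auto simp: f2_def V_def\<close>)
          ultimately show "z \<in> {x\<in>C. f1 x = w1' \<and> f2 x = w2'}"
            unfolding C_def by (cases z) auto
        qed
      qed
    qed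
    have main: "real (card {x\<in>C. f1 x \<in> S \<and> f2 x \<in> S}) / real (card C)
        = (real (card {x\<in>C. f1 x \<in> S}) / real (card C))^2"
      by (rule count_lemma[OF finC finV SV fV eq])
    have s1: "{(G, v) \<in> C. A' G v \<and> A'' G v} = {x\<in>C. f1 x \<in> S \<and> f2 x \<in> S}"
      unfolding A'_def A''_def f1_def f2_def S_def u1_def u2_def by auto
    have s2: "{(G, v) \<in> C. encode q K N G v (qrep q K m') \<in> Aset q N P x0 y} = {x\<in>C. f1 x \<in> S}"
      unfolding f1_def S_def u1_def by auto
    show ?thesis unfolding cp \<alpha>_def s1 s2 main ..
  qed
  show ?thesis using p1 p2 p3 unfolding um_def u1_def u2_def by blast
qed

end
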